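(* Let $Q$ be a finite-dimensional real affine space modelled on $V$ (with a norm $\|\cdot\|$ on $V$), $q\in Q$, $n\ge0$, and suppose $f\in A(Q)$ can be written as $$f=\sum_{m=0}^nk^m+r,$$ where each $k^m$ is a homogeneous polynomial of degree $m$ at $q$ and $r$ is a remainder of order $n$ at $q$. Then for $0\le j\le n$ and every $v\in V$, $$k^j(q+v)=\frac1{j!}\mathrm D^jf(q;v).$$
   Context: $k:Q\to\mathbb R$ is a homogeneous polynomial of degree $m$ at $q$ if there is $F:Q\times V^m\to\mathbb R$, linear in each vector argument at the fixed point $q$, with $k(q+v)=\frac1{m!}F(q;v,\dots,v)$ for all $v\in V$. $r$ is a remainder of order $n$ at $q$ if $r(q)=0$ and $\lim_{v\to0}r(q+v)/\|v\|^n=0$. The $j$-th directional derivative is $\mathrm D^jf(q;v)=\lim_{s\to0}s^{-j}\Delta^jf(q;sv)$ with $\Delta^jf(q;w)=(-1)^j\sum_{l=0}^j(-1)^l\binom jl f(q+lw)$. *)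

theory Defs
  imports "HOL-Analysis.Analysis"
begin

text \<open>The affine space Q is modelled by its (finite-dimensional) model space V itself,
  a point q plus a vector v being q + v.\<close>

definition multilinear_on_lists :: "nat \<Rightarrow> ('a::real_vector list \<Rightarrow> real) \<Rightarrow> bool" where
  "multilinear_on_lists m F \<longleftrightarrow>
     (\<forall>xs ys. length xs + length ys + 1 = m \<longrightarrow> linear (\<lambda>x. F (xs @ x # ys)))"

definition homogeneous_poly_at :: "nat \<Rightarrow> 'a::real_vector \<Rightarrow> ('a \<Rightarrow> real) \<Rightarrow> bool" where
  "homogeneous_poly_at m q k \<longleftrightarrow>
     (\<exists>F. multilinear_on_lists m F \<and> (\<forall>v. k (q + v) = F (replicate m v) / fact m))"

definition remainder_at :: "nat \<Rightarrow> 'a::real_normed_vector \<Rightarrow> ('a \<Rightarrow> real) \<Rightarrow> bool" where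
  "remainder_at n q r \<longleftrightarrow> r q = 0 \<and> ((\<lambda>v. r (q + v) / norm v ^ n) \<longlongrightarrow> 0) (at 0)"

definition fin_diff :: "nat \<Rightarrow> ('a::real_vector \<Rightarrow> real) \<Rightarrow> 'a \<Rightarrow> 'a \<Rightarrow> real" where
  "fin_diff j f q w = (-1) ^ j * (\<Sum>l=0..j. (-1) ^ l * real (j choose l) * f (q + real l *\<^sub>R w))"

definition dir_deriv_exists :: "nat \<Rightarrow> ('a::real_vector \<Rightarrow> real) \<Rightarrow> 'a \<Rightarrow> 'a \<Rightarrow> bool" where
  "dir_deriv_exists j f q v \<longleftrightarrow> (\<exists>L. ((\<lambda>s::real. fin_diff j f q (s *\<^sub>R v) / s ^ j) \<longlongrightarrow> L) (at 0))"

definition dir_deriv :: "nat \<Rightarrow> ('a::real_vector \<Rightarrow> real) \<Rightarrow> 'a \<Rightarrow> 'a \<Rightarrow> real" where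
  "dir_deriv j f q v = Lim (at (0::real)) (\<lambda>s. fin_diff j f q (s *\<^sub>R v) / s ^ j)"

end

theory Submission
  imports Defs
begin

definition bsum :: "nat \<Rightarrow> nat \<Rightarrow> real" where
  "bsum j m = (\<Sum>l\<le>j. (-1)^l * real (j choose l) * real l ^ m)"

lemma real_suc_pow: "real (Suc i) ^ m = (\<Sum>t\<le>m. real (m choose t) * real i ^ t)"
  using binomial_ring[of "real i" 1 m] by (simp add: add.commute)

lemma bsum_rec: "bsum (Suc j) (Suc m) = - real (Suc j) * (\<Sum>t\<le>m. real (m choose t) * bsum j t)"
proof -
  have "bsum (Suc j) (Suc m) = (\<Sum>i\<le>j. (-1)^(Suc i) * real (Suc j choose Suc i) * real (Suc i) ^ Suc m)"
    unfolding bsum_def by (subst sum.atMost_Suc_shift) simp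
  also have "\<dots> = (\<Sum>i\<le>j. - real (Suc j) * ((-1)^i * real (j choose i) * real (Suc i) ^ m))"
  proof (rule sum.cong[OF refl])
    fix i
    have e: "real (Suc j choose Suc i) * real (Suc i) = real (Suc j) * real (j choose i)"
      using Suc_times_binomial_eq[of j i] by (metis of_nat_mult mult.commute)
    show "(-1)^(Suc i) * real (Suc j choose Suc i) * real (Suc i) ^ Suc m = - real (Suc j) * ((-1)^i * real (j choose i) * real (Suc i) ^ m)"
    proof -
      have "(-1)^(Suc i) * real (Suc j choose Suc i) * real (Suc i) ^ Suc m
          = - ((-1)^i * (real (Suc j choose Suc i) * real (Suc i)) * real (Suc i) ^ m)"
        by (simp only: power_Suc mult_ac)
      then show ?thesis unfolding e by (simp del: of_nat_Suc add: mult_ac)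
    qed
  qed
  also have "\<dots> = - real (Suc j) * (\<Sum>i\<le>j. (-1)^i * real (j choose i) * (\<Sum>t\<le>m. real (m choose t) * real i ^ t))"
    by (simp only: real_suc_pow sum_distrib_left)
  also have "(\<Sum>i\<le>j. (-1)^i * real (j choose i) * (\<Sum>t\<le>m. real (m choose t) * real i ^ t))
      = (\<Sum>i\<le>j. \<Sum>t\<le>m. real (m choose t) * ((-1)^i * real (j choose i) * real i ^ t))"
    by (rule sum.cong[OF refl]) (simp only: sum_distrib_left mult_ac)
  also have "\<dots> = (\<Sum>t\<le>m. \<Sum>i\<le>j. real (m choose t) * ((-1)^i * real (j choose i) * real i ^ t))"
    by (rule sum.swap)
  also have "\<dots> = (\<Sum>t\<le>m. real (m choose t) * bsum j t)"
    unfolding bsum_def by (simp only: sum_distrib_left)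
  finally show ?thesis .
qed

lemma bsum_main_aux: "\<forall>t\<le>m. (\<forall>j. t < j \<longrightarrow> bsum j t = 0) \<and> bsum t t = (-1)^t * fact t"
proof (induction m)
  case 0
  have "bsum j 0 = 0" if "0 < j" for j
    using choose_alternating_sum[OF that, where 'a=real] by (simp add: bsum_def)
  then show ?case by (simp add: bsum_def)
next
  case (Suc m)
  have A: "bsum j (Suc m) = 0" if jm: "Suc m < j" for j
  proof -
    obtain j' where j: "j = Suc j'" using jm by (cases j) auto
    have "(\<Sum>t\<le>m. real (m choose t) * bsum j' t) = 0"
      using Suc.IH jm j by (intro sum.neutral) auto
    then show ?thesis using j bsum_rec by simp
  qed
  have "(\<Sum>t\<le>m. real (m choose t) * bsum m t) = bsum m m"
  proof -
    have "(\<Sum>t\<le>m. real (m choose t) * bsum m t) = (\<Sum>t<m. real (m choose t) * bsum m t) + bsum m m"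
      by (simp add: lessThan_Suc_atMost[symmetric])
    moreover have "(\<Sum>t<m. real (m choose t) * bsum m t) = 0"
      using Suc.IH by (intro sum.neutral) auto
    ultimately show ?thesis by simp
  qed
  then have "bsum (Suc m) (Suc m) = (-1)^Suc m * fact (Suc m)"
    using bsum_rec[of m m] Suc.IH by (simp add: algebra_simps)
  then show ?case
  proof (intro allI impI)
    fix t assume "t \<le> Suc m"
    then consider "t \<le> m" | "t = Suc m" by linarith
    then show "(\<forall>j. t < j \<longrightarrow> bsum j t = 0) \<and> bsum t t = (-1)^t * fact t"
      using Suc.IH A \<open>bsum (Suc m) (Suc m) = (-1)^Suc m * fact (Suc m)\<close> by cases auto
  qed
qed

lemma bsum_lt: "t < j \<Longrightarrow> bsum j t = 0" using bsum_main_aux[of t] by blast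
lemma bsum_eq: "bsum t t = (-1)^t * fact t" using bsum_main_aux[of t] by blast


lemma hom_scale_aux:
  assumes ml: "multilinear_on_lists m F"
  shows "i \<le> m \<Longrightarrow> F (replicate i (s *\<^sub>R v) @ replicate (m - i) v) = s ^ i * F (replicate m v)"
proof (induction i)
  case 0
  then show ?case by simp
next
  case (Suc i)
  have len: "length (replicate i (s *\<^sub>R v)) + length (replicate (m - Suc i) v) + 1 = m"
    using Suc.prems by simp
  have lin: "linear (\<lambda>x. F (replicate i (s *\<^sub>R v) @ x # replicate (m - Suc i) v))"
    using ml len unfolding multilinear_on_lists_def by blast
  have e1: "replicate (Suc i) (s *\<^sub>R v) @ replicate (m - Suc i) v
      = replicate i (s *\<^sub>R v) @ (s *\<^sub>R v) # replicate (m - Suc i) v"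
    by (simp add: replicate_append_same[symmetric])
  have e2: "replicate i (s *\<^sub>R v) @ v # replicate (m - Suc i) v = replicate i (s *\<^sub>R v) @ replicate (m - i) v"
    using Suc.prems by (simp add: Suc_diff_Suc[symmetric])
  have "F (replicate (Suc i) (s *\<^sub>R v) @ replicate (m - Suc i) v)
      = s * F (replicate i (s *\<^sub>R v) @ v # replicate (m - Suc i) v)"
    unfolding e1 using linear_scale[OF lin, of s v] by simp
  also have "\<dots> = s * (s ^ i * F (replicate m v))"
    unfolding e2 using Suc by simp
  finally show ?case by simp
qed

lemma hom_scale:
  assumes "homogeneous_poly_at m q k"
  shows "k (q + s *\<^sub>R v) = s ^ m * k (q + v)"
proof -
  obtain F where ml: "multilinear_on_lists m F" and kF: "\<And>v. k (q + v) = F (replicate m v) / fact m"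
    using assms unfolding homogeneous_poly_at_def by blast
  have "F (replicate m (s *\<^sub>R v)) = s ^ m * F (replicate m v)"
    using hom_scale_aux[OF ml, of m s v] by simp
  then show ?thesis using kF by simp
qed

lemma poly_part:
  fixes c :: "nat \<Rightarrow> real"
  shows "(\<Sum>l\<le>j. (-1)^l * real (j choose l) * (\<Sum>m\<le>n. (s * real l)^m * c m))
       = (\<Sum>m\<le>n. c m * s^m * bsum j m)"
proof -
  have "(\<Sum>l\<le>j. (-1)^l * real (j choose l) * (\<Sum>m\<le>n. (s * real l)^m * c m))
      = (\<Sum>l\<le>j. \<Sum>m\<le>n. c m * s^m * ((-1)^l * real (j choose l) * real l ^ m))"
    by (rule sum.cong[OF refl]) (simp add: sum_distrib_left power_mult_distrib mult_ac)
  also have "\<dots> = (\<Sum>m\<le>n. \<Sum>l\<le>j. c m * s^m * ((-1)^l * real (j choose l) * real l ^ m))"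
    by (rule sum.swap)
  also have "\<dots> = (\<Sum>m\<le>n. c m * s^m * bsum j m)"
    unfolding bsum_def by (simp only: sum_distrib_left)
  finally show ?thesis .
qed

lemma rem_lim:
  fixes r :: "'a::real_normed_vector \<Rightarrow> real"
  assumes rem: "remainder_at n q r" and jn: "j \<le> n"
  shows "((\<lambda>s::real. r (q + (s * real l) *\<^sub>R v) / s ^ j) \<longlongrightarrow> 0) (at 0)"
proof (cases "l = 0 \<or> v = 0")
  case True
  then have "(\<lambda>s::real. r (q + (s * real l) *\<^sub>R v) / s ^ j) = (\<lambda>s. 0)"
    using rem unfolding remainder_at_def by auto
  then show ?thesis by simp
next
  case False
  then have l0: "real l > 0" and v0: "norm v > 0" by auto
  define H where "H w = r (q + w) / norm w ^ n" for w
  define g where "g s = (s * real l) *\<^sub>R v" for s :: real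
  have H: "(H \<longlongrightarrow> 0) (at 0)" using rem unfolding remainder_at_def H_def by simp
  have g: "filterlim g (at 0) (at 0)"
  proof (rule filterlim_atI)
    show "(g \<longlongrightarrow> 0) (at 0)" unfolding g_def
      by (rule tendsto_eq_intros | simp)+
    show "\<forall>\<^sub>F x in at 0. g x \<noteq> 0"
      unfolding g_def eventually_at_filter using False by auto
  qed
  have HG: "((\<lambda>s. H (g s)) \<longlongrightarrow> 0) (at 0)"
    using filterlim_compose[OF H g] .
  show ?thesis
  proof (rule tendsto_0_le[OF HG, where K = "(real l * norm v) ^ n"])
    have ev: "\<forall>\<^sub>F s in at (0::real). s \<noteq> 0 \<and> \<bar>s\<bar> < 1"
      unfolding eventually_at by (rule exI[of _ 1]) auto
    show "\<forall>\<^sub>F s in at 0. norm (r (q + (s * real l) *\<^sub>R v) / s ^ j) \<le> norm (H (g s)) * (real l * norm v) ^ n"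
      using ev
    proof eventually_elim
      case (elim s)
      define a where "a = \<bar>s\<bar>"
      have a0: "a > 0" and a1: "a \<le> 1" using elim by (auto simp: a_def)
      have ng: "norm (g s) = a * (real l * norm v)"
        by (simp add: g_def a_def abs_mult)
      have "norm (H (g s)) * (real l * norm v) ^ n = \<bar>r (q + g s)\<bar> / a ^ n"
        unfolding H_def ng using l0 v0 a0 by (simp add: power_mult_distrib)
      moreover have "norm (r (q + (s * real l) *\<^sub>R v) / s ^ j) = \<bar>r (q + g s)\<bar> / a ^ j"
        by (simp add: g_def a_def power_abs)
      moreover have "\<bar>r (q + g s)\<bar> / a ^ j \<le> \<bar>r (q + g s)\<bar> / a ^ n"
        by (rule divide_left_mono) (use a0 a1 jn power_decreasing[of j n a] in auto)
      ultimately show ?case by simp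
    qed
  qed
qed

theorem proposition14:
  fixes f r :: "'a::euclidean_space \<Rightarrow> real"
    and k :: "nat \<Rightarrow> 'a \<Rightarrow> real"
    and q :: 'a and n :: nat
  assumes hom: "\<And>m. m \<le> n \<Longrightarrow> homogeneous_poly_at m q (k m)"
    and rem: "remainder_at n q r"
    and dec: "\<And>x. f x = (\<Sum>m\<le>n. k m x) + r x"
  shows "\<forall>j\<le>n. \<forall>v. dir_deriv_exists j f q v \<and> k j (q + v) = dir_deriv j f q v / fact j"
proof (intro allI impI)
  fix j v assume jn: "j \<le> n"
  define c where "c m = k m (q + v)" for m
  define K where "K m = (-1)^j * bsum j m" for m
  define P where "P s = (\<Sum>m\<le>n. if m < j then 0 else c m * s ^ (m - j) * K m)" for s :: real
  define R where "R s = (-1)^j * (\<Sum>l\<le>j. (-1)^l * real (j choose l) * (r (q + (s * real l) *\<^sub>R v) / s ^ j))" for s :: real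
  have fq: "f (q + t *\<^sub>R v) = (\<Sum>m\<le>n. t ^ m * c m) + r (q + t *\<^sub>R v)" for t
    using hom_scale[OF hom] unfolding dec c_def by (simp add: atMost_atLeast0)
  have key: "fin_diff j f q (s *\<^sub>R v) / s ^ j = P s + R s" if s0: "s \<noteq> 0" for s
  proof -
    have "fin_diff j f q (s *\<^sub>R v) = (-1)^j * (\<Sum>l\<le>j. (-1)^l * real (j choose l) * f (q + (s * real l) *\<^sub>R v))"
      unfolding fin_diff_def by (simp add: atLeast0AtMost mult_ac)
    also have "\<dots> = (-1)^j * (\<Sum>l\<le>j. (-1)^l * real (j choose l) * (\<Sum>m\<le>n. (s * real l) ^ m * c m))
        + (-1)^j * (\<Sum>l\<le>j. (-1)^l * real (j choose l) * r (q + (s * real l) *\<^sub>R v))"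
      unfolding fq by (simp add: algebra_simps sum.distrib)
    also have "\<dots> = (\<Sum>m\<le>n. c m * s^m * K m)
        + (-1)^j * (\<Sum>l\<le>j. (-1)^l * real (j choose l) * r (q + (s * real l) *\<^sub>R v))"
      unfolding poly_part K_def by (simp add: sum_distrib_left mult_ac)
    finally have "fin_diff j f q (s *\<^sub>R v) / s ^ j = (\<Sum>m\<le>n. c m * s^m * K m) / s ^ j
        + (-1)^j * (\<Sum>l\<le>j. (-1)^l * real (j choose l) * r (q + (s * real l) *\<^sub>R v)) / s ^ j"
      by (simp add: add_divide_distrib)
    also have "(\<Sum>m\<le>n. c m * s^m * K m) / s ^ j = P s"
      unfolding P_def sum_divide_distrib
    proof (rule sum.cong[OF refl])
      fix m
      show "c m * s^m * K m / s ^ j = (if m < j then 0 else c m * s ^ (m - j) * K m)"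
      proof (cases "m < j")
        case True then show ?thesis by (simp add: K_def bsum_lt)
      next
        case False
        then have "s ^ m = s ^ (m - j) * s ^ j" by (simp add: power_add[symmetric])
        then show ?thesis using False s0 by simp
      qed
    qed
    also have "(-1)^j * (\<Sum>l\<le>j. (-1)^l * real (j choose l) * r (q + (s * real l) *\<^sub>R v)) / s ^ j = R s"
      unfolding R_def by (simp only: times_divide_eq_right[symmetric] sum_divide_distrib)
    finally show ?thesis .
  qed
  have Pl: "(P \<longlongrightarrow> P 0) (at 0)"
    unfolding P_def
  proof (rule tendsto_sum)
    fix m
    show "((\<lambda>s. if m < j then 0 else c m * s ^ (m - j) * K m) \<longlongrightarrow> (if m < j then 0 else c m * 0 ^ (m - j) * K m)) (at 0)"
      by (cases "m < j") (simp_all, intro tendsto_intros)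
  qed
  have P0: "P 0 = c j * fact j"
  proof -
    have "P 0 = (\<Sum>m\<le>n. if m = j then c j * K j else 0)"
      unfolding P_def by (rule sum.cong) auto
    also have "\<dots> = c j * K j" using jn by simp
    finally show ?thesis by (simp add: K_def bsum_eq flip: power_add)
  qed
  have Rl: "(R \<longlongrightarrow> 0) (at 0)"
  proof -
    have "(R \<longlongrightarrow> (-1)^j * (\<Sum>l\<le>j. (-1)^l * real (j choose l) * 0)) (at 0)"
      unfolding R_def by (intro tendsto_intros rem_lim[OF rem jn])
    then show ?thesis by simp
  qed
  have ev: "\<forall>\<^sub>F s in at (0::real). P s + R s = fin_diff j f q (s *\<^sub>R v) / s ^ j"
    unfolding eventually_at_filter by (auto simp: key)
  have lim: "((\<lambda>s. fin_diff j f q (s *\<^sub>R v) / s ^ j) \<longlongrightarrow> c j * fact j) (at 0)"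
    using Lim_transform_eventually[OF tendsto_add[OF Pl Rl] ev] P0 by simp
  show "dir_deriv_exists j f q v \<and> k j (q + v) = dir_deriv j f q v / fact j"
  proof
    show "dir_deriv_exists j f q v" unfolding dir_deriv_exists_def using lim by blast
    have "dir_deriv j f q v = c j * fact j"
      unfolding dir_deriv_def by (rule tendsto_Lim[OF trivial_limit_at lim])
    then show "k j (q + v) = dir_deriv j f q v / fact j" by (simp add: c_def)
  qed
qed

end
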